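(* Let $a\ge2$, $d\ge1$ and $s$ be integers with $\gcd(a,d)=1$ and $1\le s<a$, and put $b=a+sd$. Let $\mathit{NR}$ be the set of positive integers not representable as $\sum_{i=0}^s(a+id)x_i$ with $x_0,\dots,x_s$ nonnegative integers, and let $S_m=\sum_{n\in\mathit{NR}}n^m$. Then for every integer $m\ge2$, \[ m(m-1)S_{m-2}=\sum_{j=0}^m\binom{m}{j}d^{m-j-1}B_{m-j}a^{j-1}\phi_j\!\left(\lceil (b-1)/s\rceil\right)+\sum_{j=0}^m\binom{m}{j}(-d)^{m-j-1}B_{m-j}b^{j-1}\phi_j\!\left(\lceil (a-1)/s\rceil\right)-mB_{m-1}, \] and for every integer $m\ge1$, \[ S_{m-1}=\frac{1}{m(m+1)}\sum_{j=0}^{m}\sum_{i=0}^{j}\binom{m+1}{j+1}\binom{j+1}{i+1}d^{m-j-1}B_{m-j}B_{j-i}a^{j}\left\lceil\frac{b-1}{s}\right\rceil^{i+1} +\frac{1}{m(m+1)}\sum_{j=0}^{m}\sum_{i=0}^{j}\binom{m+1}{j+1}\binom{j+1}{i+1}(-d)^{m-j-1}B_{m-j}B_{j-i}b^{j}\left\lceil\frac{a-1}{s}\right\rceil^{i+1}-\frac1mB_m . \]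
   Context: $B_m(x)$ denotes the Bernoulli polynomials, defined by $\frac{te^{tx}}{e^t-1}=\sum_{m\ge0}B_m(x)\frac{t^m}{m!}$; $B_m=B_m(0)$ are the Bernoulli numbers; $\phi_j(x)=B_j(x)-B_j$ (so $\phi_0=0$, and terms containing the factor $\phi_0$ are zero). $\lceil x\rceil$ is the least integer not less than $x$. *)

theory Defs
  imports Complex_Main "HOL-Computational_Algebra.Formal_Power_Series"
begin

definition bernpoly :: "nat \<Rightarrow> real \<Rightarrow> real" where
  "bernpoly m x = fact m * fps_nth (fps_X * fps_exp x / (fps_exp 1 - 1)) m"

definition bernoulli :: "nat \<Rightarrow> real" where
  "bernoulli m = bernpoly m 0"

definition phi :: "nat \<Rightarrow> real \<Rightarrow> real" where
  "phi j x = bernpoly j x - bernoulli j"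

definition NR :: "nat \<Rightarrow> nat \<Rightarrow> nat \<Rightarrow> nat set" where
  "NR a d s = {n. 0 < n \<and> \<not> (\<exists>x :: nat \<Rightarrow> nat. n = (\<Sum>i\<le>s. (a + i * d) * x i))}"

definition Ssum :: "nat \<Rightarrow> nat \<Rightarrow> nat \<Rightarrow> nat \<Rightarrow> real" where
  "Ssum a d s m = (\<Sum>n\<in>NR a d s. real n ^ m)"

end

theory Submission
  imports Defs "HOL-Computational_Algebra.Formal_Power_Series"
begin


definition bfps :: "real \<Rightarrow> real fps" where
  "bfps x = fps_X * fps_exp x / (fps_exp 1 - 1)"

lemma bernpoly_bfps: "bernpoly m x = fact m * fps_nth (bfps x) m"
  by (simp add: bernpoly_def bfps_def)

lemma D_ne0: "(fps_exp (1::real) - 1) \<noteq> 0"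
proof
  assume "fps_exp (1::real) - 1 = 0"
  then have "fps_nth (fps_exp (1::real) - 1) 1 = 0" by simp
  then show False by simp
qed

lemma D_subdeg: "subdegree (fps_exp (1::real) - 1) = 1"
  by (rule subdegreeI) auto

lemma bfps_mult: "bfps x * (fps_exp 1 - 1) = fps_X * fps_exp x"
proof -
  have ne: "fps_exp x \<noteq> (0::real fps)"
  proof
    assume "fps_exp x = (0::real fps)"
    then have "fps_nth (fps_exp x) 0 = fps_nth (0::real fps) 0" by simp
    then show False by simp
  qed
  have "subdegree (fps_X * fps_exp x) = 1"
    using fps_subdegree_mult_fps_X(1)[OF ne] by (simp add: subdegree_eq_0_iff)
  then have s: "subdegree (fps_X * fps_exp x) = subdegree (fps_exp (1::real) - 1)"
    using D_subdeg by (simp only:)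
  show ?thesis unfolding bfps_def
    by (rule fps_times_divide_eq[OF D_ne0]) (simp only: s order_refl)
qed

lemma bfps_unique: "g * (fps_exp 1 - 1) = fps_X * fps_exp x \<Longrightarrow> g = bfps x"
  using bfps_mult[of x] D_ne0 by (metis mult_right_cancel)

lemma bfps_shift: "bfps (x + 1) - bfps x = fps_X * fps_exp x"
proof -
  have "(fps_X * fps_exp x + bfps x) * (fps_exp 1 - 1) = fps_X * fps_exp x * (fps_exp 1 - 1) + fps_X * fps_exp x"
    by (simp add: algebra_simps bfps_mult[symmetric])
  also have "\<dots> = fps_X * fps_exp (x+1)"
    by (simp add: algebra_simps fps_exp_add_mult)
  finally have "(fps_X * fps_exp x + bfps x) * (fps_exp 1 - 1) = fps_X * fps_exp (x+1)" .
  then have "fps_X * fps_exp x + bfps x = bfps (x+1)" by (rule bfps_unique)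
  then show ?thesis by (metis add_diff_cancel)
qed

lemma bernpoly_shift: "bernpoly n (x + 1) - bernpoly n x = of_nat n * x ^ (n - 1)"
proof -
  have "bernpoly n (x + 1) - bernpoly n x = fact n * fps_nth (bfps (x+1) - bfps x) n"
    by (simp add: bernpoly_bfps algebra_simps)
  also have "\<dots> = fact n * fps_nth (fps_X * fps_exp x) n" by (simp add: bfps_shift)
  also have "\<dots> = of_nat n * x ^ (n - 1)"
  proof (cases n)
    case (Suc k)
    then show ?thesis by (simp add: fps_X_mult_nth fact_Suc field_simps)
  qed (simp add: fps_X_mult_nth)
  finally show ?thesis .
qed

lemma bfps_expand: "bfps x = fps_exp x * bfps 0"
proof -
  have "(fps_exp x * bfps 0) * (fps_exp 1 - 1) = fps_X * fps_exp x"
    by (simp add: mult.assoc bfps_mult mult.commute)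
  then show ?thesis by (rule bfps_unique[symmetric])
qed

lemma bernpoly_expand:
  "bernpoly n x = (\<Sum>i=0..n. real (n choose i) * bernoulli (n - i) * x ^ i)"
proof -
  have e: "fps_nth (bfps x) n = fps_nth (fps_exp x * bfps 0) n" using bfps_expand by metis
  have "bernpoly n x = fact n * (\<Sum>i=0..n. x ^ i / fact i * (fps_nth (bfps 0) (n - i)))"
    unfolding bernpoly_bfps e by (simp add: fps_mult_nth)
  also have "\<dots> = (\<Sum>i=0..n. real (n choose i) * bernoulli (n - i) * x ^ i)"
    unfolding sum_distrib_left
  proof (rule sum.cong[OF refl])
    fix i assume "i \<in> {0..n}"
    then have i: "i \<le> n" by simp
    have "bernoulli (n - i) = fact (n - i) * fps_nth (bfps 0) (n - i)"
      by (simp add: bernoulli_def bernpoly_bfps)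
    then show "fact n * (x ^ i / fact i * fps_nth (bfps 0) (n - i)) =
      real (n choose i) * bernoulli (n - i) * x ^ i"
      using i by (simp add: binomial_fact field_simps)
  qed
  finally show ?thesis .
qed

lemma m1: "fps_const (-1::real) = - 1"
  by (rule fps_ext) simp

lemma bfps_reflect: "bfps x oo (fps_const (-1) * fps_X) = bfps (1 - x)"
proof -
  let ?h = "fps_const (-1::real) * fps_X"
  have h0: "fps_nth ?h 0 = 0" by simp
  have "(bfps x oo ?h) * (fps_exp 1 - 1 oo ?h) = (fps_X * fps_exp x) oo ?h"
    by (simp add: bfps_mult[symmetric] fps_compose_mult_distrib[OF h0])
  then have e1: "(bfps x oo ?h) * (fps_exp (-1) - 1) = ?h * fps_exp (- x)"
    by (simp add: fps_compose_sub_distrib fps_compose_mult_distrib[OF h0]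
        fps_X_fps_compose_startby0[OF h0] fps_compose_1)
  have "(bfps x oo ?h) * (fps_exp 1 - 1) = fps_X * fps_exp (1 - x)"
  proof -
    have "(bfps x oo ?h) * (fps_exp 1 - 1) = - ((bfps x oo ?h) * (fps_exp (-1) - 1) * fps_exp 1)"
      by (simp add: algebra_simps fps_exp_add_mult[symmetric])
    also have "\<dots> = - (?h * fps_exp (-x) * fps_exp 1)" by (simp only: e1)
    also have "\<dots> = fps_X * fps_exp (1 - x)"
      using m1 by (simp add: mult.assoc fps_exp_add_mult[symmetric])
    finally show ?thesis .
  qed
  then show ?thesis by (rule bfps_unique)
qed

lemma bernpoly_reflect: "bernpoly n (- x) = (-1) ^ n * bernpoly n (x + 1)"
proof -
  from bfps_reflect[of "x+1"] have r: "bfps (-x) = bfps (x+1) oo fps_const (-1) * fps_X" by simp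
  have "fps_nth (bfps (-x)) n = fps_nth (bfps (x+1) oo fps_const (-1) * fps_X) n" by (simp only: r)
  also have "\<dots> = (-1)^n * fps_nth (bfps (x+1)) n" by (rule fps_nth_compose_linear)
  finally have "fps_nth (bfps (-x)) n = (-1)^n * fps_nth (bfps (x+1)) n" .
  then show ?thesis by (simp add: bernpoly_bfps)
qed


lemma bernpoly_mult:
  assumes d: "d > (0::nat)"
  shows "(\<Sum>r<d. bernpoly n (real r / real d)) = real d * (1 / real d) ^ n * bernoulli n"
proof -
  define c where "c = 1 / real d"
  have c0: "c \<noteq> 0" using d by (simp add: c_def)
  have dc: "real d * c = 1" using d by (simp add: c_def)
  define E where "E = fps_exp c"
  define S where "S = (\<Sum>r<d. E ^ r)"
  define G where "G = (\<Sum>r<d. bfps (real r / real d))"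
  define h where "h = fps_const c * fps_X"
  define H where "H = fps_const (real d) * (bfps 0 oo h)"
  have h0: "fps_nth h 0 = 0" by (simp add: h_def)
  have Er: "bfps (real r / real d) * (fps_exp 1 - 1) = fps_X * E ^ r" for r
    by (simp add: bfps_mult E_def fps_exp_power_mult c_def)
  have GD: "G * (fps_exp 1 - 1) = fps_X * S"
    by (simp add: G_def S_def sum_distrib_right sum_distrib_left Er)
  have SE: "S * (E - 1) = fps_exp 1 - 1"
  proof -
    have "E ^ d - 1 = (E - 1) * S" unfolding S_def by (rule power_diff_1_eq)
    moreover have "E ^ d = fps_exp 1" using dc by (simp add: E_def fps_exp_power_mult)
    ultimately show ?thesis by (simp add: mult.commute)
  qed
  have S0: "S \<noteq> 0"
  proof
    assume "S = 0"
    then have "fps_nth S 0 = 0" by simp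
    moreover have "fps_nth S 0 = real d"
      by (simp add: S_def fps_sum_nth fps_nth_power_0 E_def)
    ultimately show False using d by simp
  qed
  have E1: "E - 1 \<noteq> 0"
  proof
    assume "E - 1 = 0"
    then have "fps_nth (E - 1) 1 = 0" by simp
    then show False using c0 by (simp add: E_def)
  qed
  have "(G * (E - 1)) * S = G * (S * (E - 1))" by (simp add: mult_ac)
  also have "\<dots> = fps_X * S" using GD SE by simp
  finally have "(G * (E - 1)) * S = fps_X * S" .
  then have G1: "G * (E - 1) = fps_X" using S0 by (metis mult_right_cancel)
  have "(bfps 0 oo h) * (fps_exp 1 - 1 oo h) = (bfps 0 * (fps_exp 1 - 1)) oo h"
    by (simp only: fps_compose_mult_distrib[OF h0])
  also have "\<dots> = fps_X oo h" using bfps_mult[of 0] by simp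
  finally have "(bfps 0 oo h) * (fps_exp 1 - 1 oo h) = fps_X oo h" .
  then have "(bfps 0 oo h) * (E - 1) = h"
    by (simp add: fps_compose_sub_distrib fps_X_fps_compose_startby0[OF h0] fps_compose_1
        E_def h_def)
  then have "H * (E - 1) = fps_const (real d) * h" by (simp add: H_def mult.assoc)
  also have "\<dots> = fps_X" using dc by (simp add: h_def mult.assoc[symmetric] fps_const_mult)
  finally have "G * (E - 1) = H * (E - 1)" using G1 by simp
  then have GH: "G = H" using E1 by (metis mult_right_cancel)
  have "(\<Sum>r<d. bernpoly n (real r / real d)) = fact n * fps_nth G n"
    by (simp add: G_def bernpoly_bfps fps_sum_nth sum_distrib_left)
  also have "\<dots> = fact n * (real d * (c ^ n * fps_nth (bfps 0) n))"
    by (simp add: GH H_def h_def fps_nth_compose_linear)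
  also have "\<dots> = real d * (1 / real d) ^ n * bernoulli n"
    by (simp add: bernoulli_def bernpoly_bfps c_def)
  finally show ?thesis .
qed



lemma rep_imp:
  fixes a d s n :: nat
  assumes "n = (\<Sum>i\<le>s. (a + i * d) * x i)"
  shows "\<exists>k j. n = k*a + j*d \<and> j \<le> k*s"
proof (intro exI conjI)
  show "n = (\<Sum>i\<le>s. x i) * a + (\<Sum>i\<le>s. i * x i) * d"
    by (simp add: assms algebra_simps sum.distrib sum_distrib_left sum_distrib_right)
  show "(\<Sum>i\<le>s. i * x i) \<le> (\<Sum>i\<le>s. x i) * s"
    unfolding sum_distrib_right by (rule sum_mono) (metis atMost_iff mult.commute mult_le_mono2)
qed

lemma rep_intro:
  fixes a d s n k j :: nat
  assumes s: "s \<ge> 1" and n: "n = k*a + j*d" and j: "j \<le> k*s"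
  shows "\<exists>x. n = (\<Sum>i\<le>s. (a + i * d) * x i)"
proof (cases "j div s < k")
  case True
  define q where "q = j div s"
  define r where "r = j mod s"
  have r: "r < s" using s by (simp add: r_def)
  have jqr: "j = q * s + r" by (simp add: q_def r_def)
  define e0 where "e0 = k - q - 1"
  define x where "x = (\<lambda>i. (if i = s then q else 0) + (if i = r then 1 else 0) + (if i = 0 then e0 else 0))"
  have "(\<Sum>i\<le>s. (a + i * d) * x i) = (\<Sum>i\<le>s. (if i = s then (a + s*d) * q else 0))
     + (\<Sum>i\<le>s. (if i = r then (a + r * d) else 0)) + (\<Sum>i\<le>s. (if i = 0 then a * e0 else 0))"
  proof -
    have "(a + i * d) * x i = (if i = s then (a + s*d) * q else 0) + (if i = r then (a + r * d) else 0)
       + (if i = 0 then a * e0 else 0)" for i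
      using r unfolding x_def by (cases "i = s"; cases "i = r"; cases "i = 0") (simp_all add: algebra_simps)
    then show ?thesis by (simp add: sum.distrib)
  qed
  also have "\<dots> = (a + s*d) * q + (a + r*d) + a * e0"
    using r by (simp only: sum.delta finite_atMost) simp
  also have "\<dots> = n"
  proof -
    have e: "k = q + 1 + e0" using True unfolding q_def[symmetric] e0_def by simp
    show ?thesis using n jqr e by (simp add: algebra_simps)
  qed
  finally show ?thesis by (intro exI[of _ x]) simp
next
  case False
  then have "j = k * s"
  proof -
    have "j div s \<le> k * s div s" using j by (rule div_le_mono)
    then have "j div s = k" using False s by simp
    then have "k * s \<le> j" using s by (metis div_times_less_eq_dividend mult.commute)
    then show ?thesis using j by simp
  qed
  define x where "x = (\<lambda>i::nat. if i = s then k else 0)"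
  have "(\<Sum>i\<le>s. (a + i * d) * x i) = (a + s*d) * k"
    unfolding x_def by (simp add: if_distrib cong: if_cong)
  also have "\<dots> = n" using n \<open>j = k*s\<close> by (simp add: algebra_simps)
  finally show ?thesis by (intro exI[of _ x]) simp
qed


definition Aset :: "nat \<Rightarrow> nat \<Rightarrow> nat \<Rightarrow> nat set" where
  "Aset a d k = (\<lambda>t. k*a mod d + t*d) ` {..<k*a div d}"

definition Bset :: "nat \<Rightarrow> nat \<Rightarrow> nat \<Rightarrow> nat \<Rightarrow> nat set" where
  "Bset a d s k = (\<lambda>t. k*a + t*d) ` {..k*s}"

lemma memA:
  fixes d :: nat assumes d: "d > 0"
  shows "n \<in> Aset a d k \<longleftrightarrow> n < k*a \<and> n mod d = k*a mod d"
proof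
  assume "n \<in> Aset a d k"
  then obtain t where t: "t < k*a div d" "n = k*a mod d + t*d" by (auto simp: Aset_def)
  have "Suc t * d \<le> k*a div d * d" using t(1) by (intro mult_le_mono1) simp
  then have "t * d + d \<le> k*a div d * d" by simp
  moreover have "k*a div d * d + k*a mod d = k*a" by (rule div_mult_mod_eq)
  ultimately have "n < k*a" using t(2) d by linarith
  moreover have "n mod d = k*a mod d" using t(2) by simp
  ultimately show "n < k*a \<and> n mod d = k*a mod d" by simp
next
  assume h: "n < k*a \<and> n mod d = k*a mod d"
  have e1: "n = n mod d + n div d * d" by simp
  have e2: "k*a = k*a mod d + k*a div d * d" by simp
  have "n div d < k*a div d"
  proof (rule ccontr)
    assume "\<not> n div d < k*a div d"
    then have "k*a div d * d \<le> n div d * d" by simp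
    then show False using h e1 e2 by linarith
  qed
  then show "n \<in> Aset a d k" unfolding Aset_def using h e1 by (intro image_eqI[of _ _ "n div d"]) auto
qed

lemma cancel:
  fixes a d k k' :: nat
  assumes "coprime a d" "k*a mod d = k'*a mod d" "k \<le> k'"
  shows "d dvd (k' - k)"
proof -
  have "d dvd (k'*a - k*a)" using assms(2,3) by (metis mod_eq_dvd_iff_nat mult_le_mono1)
  then have "d dvd (k' - k) * a" by (simp add: diff_mult_distrib)
  then show ?thesis using assms(1) by (metis coprime_commute coprime_dvd_mult_left_iff)
qed

lemma classes_bij:
  fixes a d N :: nat
  assumes cop: "coprime a d" and d: "d > 0"
  shows "bij_betw (\<lambda>k. k*a mod d) {N..<N+d} {..<d}"
proof -
  have inj: "inj_on (\<lambda>k. k*a mod d) {N..<N+d}"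
  proof (rule inj_onI)
    fix k k' assume k: "k \<in> {N..<N+d}" and k': "k' \<in> {N..<N+d}" and eq: "k*a mod d = k'*a mod d"
    show "k = k'"
    proof (cases "k \<le> k'")
      case True
      then have "d dvd (k' - k)" using cancel[OF cop eq] by simp
      moreover have "k' - k < d" using k k' by auto
      ultimately show ?thesis using True by (metis dvd_imp_le le_antisym neq0_conv zero_less_diff not_le)
    next
      case False
      then have "d dvd (k - k')" using cancel[OF cop eq[symmetric]] by simp
      moreover have "k - k' < d" using k k' by auto
      ultimately show ?thesis using False by (metis dvd_imp_le neq0_conv zero_less_diff not_le)
    qed
  qed
  moreover have "(\<lambda>k. k*a mod d) ` {N..<N+d} = {..<d}"
  proof (rule card_subset_eq)
    show "finite {..<d}" by simp
    show "(\<lambda>k. k*a mod d) ` {N..<N+d} \<subseteq> {..<d}" using d by auto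
    show "card ((\<lambda>k. k*a mod d) ` {N..<N+d}) = card {..<d}"
      using card_image[OF inj] by simp
  qed
  ultimately show ?thesis by (simp add: bij_betw_def)
qed

lemma class_exists:
  fixes a d N :: nat
  assumes cop: "coprime a d" and d: "d > 0"
  shows "\<exists>k\<in>{N..<N+d}. k*a mod d = n mod d"
proof -
  have "n mod d \<in> (\<lambda>k. k*a mod d) ` {N..<N+d}"
    using classes_bij[OF cop d, of N] d by (simp add: bij_betw_def)
  then show ?thesis by auto
qed

lemma cover:
  fixes a d s N k n :: nat
  assumes a: "a > 0" and HN1: "a \<le> N*s + 1" and k: "N \<le> k" and kn: "k*a \<le> n"
    and m: "n mod d = k*a mod d"
  shows "\<exists>k2 j. n = k2*a + j*d \<and> j \<le> k2*s"
proof -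
  have "d dvd (n - k*a)" using m kn by (metis mod_eq_dvd_iff_nat)
  then obtain t where t: "n - k*a = d * t" by (auto simp: dvd_def)
  define qq where "qq = t div a"
  define r where "r = t mod a"
  have tr: "t = qq*a + r" by (simp add: qq_def r_def)
  have r: "r + 1 \<le> a" using a by (simp add: r_def Suc_leI)
  have n: "n = (k + qq*d)*a + r*d" using t tr kn by (simp add: algebra_simps)
  have "r \<le> N*s" using r HN1 by simp
  also have "\<dots> \<le> k*s" using k by simp
  also have "\<dots> \<le> (k + qq*d)*s" by (simp add: mult_le_mono1)
  finally show ?thesis using n by blast
qed



lemma rep_iff:
  fixes a d s n :: nat assumes s: "s \<ge> 1"
  shows "(\<exists>x. n = (\<Sum>i\<le>s. (a + i * d) * x i)) \<longleftrightarrow> (\<exists>k j. n = k*a + j*d \<and> j \<le> k*s)"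
proof
  assume "\<exists>x. n = (\<Sum>i\<le>s. (a + i * d) * x i)"
  then obtain x where "n = (\<Sum>i\<le>s. (a + i * d) * x i)" by blast
  then show "\<exists>k j. n = k*a + j*d \<and> j \<le> k*s" by (rule rep_imp)
next
  assume "\<exists>k j. n = k*a + j*d \<and> j \<le> k*s"
  then obtain k j where "n = k*a + j*d" "j \<le> k*s" by blast
  then show "\<exists>x. n = (\<Sum>i\<le>s. (a + i * d) * x i)" by (rule rep_intro[OF s])
qed

lemma NR_eq:
  fixes a d s N :: nat
  assumes a: "a \<ge> 2" and d: "d \<ge> 1" and cop: "coprime a d" and s: "s \<ge> 1"
    and HN1: "a \<le> N*s + 1" and HN2: "\<And>k. k < N \<Longrightarrow> k*s + 1 < a"
  shows "NR a d s = (\<Union>k\<in>{N..<N+d}. Aset a d k) - (\<Union>k\<in>{..<N}. Bset a d s k)"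
proof (intro equalityI subsetI)
  have d0: "d > 0" using d by simp
  fix n assume "n \<in> NR a d s"
  then have n0: "0 < n" and nrep: "\<not> (\<exists>k j. n = k*a + j*d \<and> j \<le> k*s)"
    unfolding NR_def using rep_iff[OF s] by auto
  obtain k where k: "k \<in> {N..<N+d}" "k*a mod d = n mod d" using class_exists[OF cop d0] by blast
  have "n < k*a"
  proof (rule ccontr)
    assume "\<not> n < k*a"
    then have "k*a \<le> n" by simp
    then show False using cover[of a N s k n d] a HN1 k nrep by auto
  qed
  then have "n \<in> Aset a d k" using memA[OF d0] k by simp
  moreover have "n \<notin> Bset a d s k'" for k'
    using nrep unfolding Bset_def by auto
  ultimately show "n \<in> (\<Union>k\<in>{N..<N+d}. Aset a d k) - (\<Union>k\<in>{..<N}. Bset a d s k)"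
    using k by blast
next
  have d0: "d > 0" using d by simp
  fix n assume "n \<in> (\<Union>k\<in>{N..<N+d}. Aset a d k) - (\<Union>k\<in>{..<N}. Bset a d s k)"
  then obtain k where k: "k \<in> {N..<N+d}" "n \<in> Aset a d k" and nB: "\<And>k'. k' < N \<Longrightarrow> n \<notin> Bset a d s k'"
    by blast
  have nk: "n < k*a" "n mod d = k*a mod d" using k(2) memA[OF d0] by auto
  have nrep: "\<not> (\<exists>k j. n = k*a + j*d \<and> j \<le> k*s)"
  proof
    assume "\<exists>k j. n = k*a + j*d \<and> j \<le> k*s"
    then obtain k' j where kj: "n = k'*a + j*d" "j \<le> k'*s" by blast
    have "k' < k"
    proof (rule ccontr)
      assume "\<not> k' < k"
      then have "k*a \<le> k'*a" by simp
      then show False using kj nk by linarith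
    qed
    have "n mod d = k'*a mod d" using kj by simp
    then have "d dvd (k - k')" using cancel[OF cop, of k' k] nk \<open>k' < k\<close> by simp
    then have "d \<le> k - k'" using \<open>k' < k\<close> by (simp add: dvd_imp_le)
    moreover have "k < N + d" using k(1) by simp
    ultimately have "k' < N" using \<open>k' < k\<close> by linarith
    moreover have "n \<in> Bset a d s k'" unfolding Bset_def using kj by auto
    ultimately show False using nB by blast
  qed
  moreover have "n \<noteq> 0"
  proof
    assume "n = 0" then show False using nrep by (metis mult_0 add_0 le0)
  qed
  ultimately show "n \<in> NR a d s" unfolding NR_def using rep_iff[OF s] by auto
qed

lemma U2_sub:
  fixes a d s N :: nat
  assumes a: "a \<ge> 2" and d: "d \<ge> 1" and cop: "coprime a d" and s: "s \<ge> 1"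
    and HN1: "a \<le> N*s + 1" and HN2: "\<And>k. k < N \<Longrightarrow> k*s + 1 < a"
  shows "(\<Union>k\<in>{..<N}. Bset a d s k) \<subseteq> (\<Union>k\<in>{N..<N+d}. Aset a d k)"
proof
  have d0: "d > 0" using d by simp
  fix n assume "n \<in> (\<Union>k\<in>{..<N}. Bset a d s k)"
  then obtain k t where k: "k < N" and t: "t \<le> k*s" and n: "n = k*a + t*d"
    unfolding Bset_def by auto
  obtain k' where k': "k' \<in> {N..<N+d}" "k'*a mod d = (k*a) mod d"
    using class_exists[OF cop d0, of N "k*a"] by blast
  have "d dvd (k' - k)" using cancel[OF cop k'(2)[symmetric]] k k' by simp
  then have "d \<le> k' - k" using k k' by (simp add: dvd_imp_le)
  moreover have "N \<le> k'" using k' by simp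
  ultimately have "k + d \<le> k'" using k by linarith
  then have kk: "(k + d) * a \<le> k' * a" by (rule mult_le_mono1)
  have td: "t*d < a*d"
  proof -
    have "t < a" using t HN2[OF k] by simp
    then show ?thesis using d0 by simp
  qed
  have e: "(k + d)*a = k*a + a*d" by (simp add: algebra_simps)
  have "n < k'*a" using n e kk td by linarith
  moreover have "n mod d = k'*a mod d" using n k' by simp
  ultimately show "n \<in> (\<Union>k\<in>{N..<N+d}. Aset a d k)" using memA[OF d0] k' by blast
qed

lemma A_disj:
  fixes a d N :: nat
  assumes d: "d \<ge> 1" and cop: "coprime a d"
  shows "\<forall>i\<in>{N..<N+d}. \<forall>j\<in>{N..<N+d}. i \<noteq> j \<longrightarrow> Aset a d i \<inter> Aset a d j = {}"
proof (intro ballI impI)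
  have d0: "d > 0" using d by simp
  fix i j assume ij: "i \<in> {N..<N+d}" "j \<in> {N..<N+d}" "i \<noteq> j"
  show "Aset a d i \<inter> Aset a d j = {}"
  proof (rule ccontr)
    assume "Aset a d i \<inter> Aset a d j \<noteq> {}"
    then obtain n where "n \<in> Aset a d i" "n \<in> Aset a d j" by blast
    then have "i*a mod d = j*a mod d" using memA[OF d0] by auto
    then have "i = j" using classes_bij[OF cop d0, of N] ij unfolding bij_betw_def inj_on_def by blast
    then show False using ij by simp
  qed
qed

lemma B_disj:
  fixes a d s N :: nat
  assumes d: "d \<ge> 1" and cop: "coprime a d" and HN2: "\<And>k. k < N \<Longrightarrow> k*s + 1 < a"
  shows "\<forall>i\<in>{..<N}. \<forall>j\<in>{..<N}. i \<noteq> j \<longrightarrow> Bset a d s i \<inter> Bset a d s j = {}"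
proof -
  have main: "Bset a d s i \<inter> Bset a d s j = {}" if ij: "i < j" "j < N" for i j
  proof (rule ccontr)
    have d0: "d > 0" using d by simp
    assume "Bset a d s i \<inter> Bset a d s j \<noteq> {}"
    then obtain t t' where t: "t \<le> i*s" "t' \<le> j*s" and eq: "i*a + t*d = j*a + t'*d"
      unfolding Bset_def by auto
    have "(i*a + t*d) mod d = (j*a + t'*d) mod d" using eq by simp
    then have "i*a mod d = j*a mod d" by simp
    then have "d dvd (j - i)" using cancel[OF cop] ij by simp
    then have "d \<le> j - i" using ij by (simp add: dvd_imp_le)
    then have "i + d \<le> j" using ij by linarith
    then have kk: "(i + d) * a \<le> j * a" by (rule mult_le_mono1)
    have td: "t*d < a*d"
    proof -
      have "t < a" using t HN2[of i] ij by simp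
      then show ?thesis using d0 by simp
    qed
    have e: "(i + d)*a = i*a + a*d" by (simp add: algebra_simps)
    have "i*a + t*d < j*a" using e kk td by linarith
    then show False using eq by linarith
  qed
  show ?thesis
  proof (intro ballI impI)
    fix i j assume "i \<in> {..<N}" "j \<in> {..<N}" "i \<noteq> j"
    then show "Bset a d s i \<inter> Bset a d s j = {}"
      using main[of i j] main[of j i] by (cases "i < j") auto
  qed
qed



lemma APL:
  fixes d r T q :: nat assumes d: "d > 0"
  shows "real (Suc q) * (\<Sum>t<T. (real r + real t * real d) ^ q) =
    real d ^ q * (bernpoly (Suc q) (real r / real d + real T) - bernpoly (Suc q) (real r / real d))"
proof -
  have step: "real (Suc q) * (real r + real t * real d) ^ q =
    real d ^ q * (bernpoly (Suc q) (real r / real d + real (Suc t)) - bernpoly (Suc q) (real r / real d + real t))" for t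
  proof -
    define y where "y = real r / real d + real t"
    have A: "(real r + real t * real d) ^ q = real d ^ q * y ^ q"
    proof -
      have "real r + real t * real d = real d * y" using d by (simp add: y_def field_simps)
      then show ?thesis by (simp add: power_mult_distrib)
    qed
    have B: "bernpoly (Suc q) (y + 1) - bernpoly (Suc q) y = real (Suc q) * y ^ q"
      using bernpoly_shift[of "Suc q" y] by simp
    have e: "real r / real d + real (Suc t) = y + 1" by (simp add: y_def)
    have "real (Suc q) * (real r + real t * real d) ^ q = real d ^ q * (real (Suc q) * y ^ q)"
      unfolding A by (simp only: mult_ac)
    also have "\<dots> = real d ^ q * (bernpoly (Suc q) (y + 1) - bernpoly (Suc q) y)" by (simp only: B)
    finally show ?thesis by (simp only: e y_def)
  qed
  have "real (Suc q) * (\<Sum>t<T. (real r + real t * real d) ^ q) =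
      real d ^ q * (\<Sum>t<T. bernpoly (Suc q) (real r / real d + real (Suc t)) - bernpoly (Suc q) (real r / real d + real t))"
    unfolding sum_distrib_left by (rule sum.cong[OF refl]) (rule step)
  also have "\<dots> = real d ^ q * (bernpoly (Suc q) (real r / real d + real T) - bernpoly (Suc q) (real r / real d))"
    using sum_lessThan_telescope[of "\<lambda>t. bernpoly (Suc q) (real r / real d + real t)" T] by simp
  finally show ?thesis .
qed

lemma real_mod_div: "d > (0::nat) \<Longrightarrow> real (x mod d) / real d + real (x div d) = real x / real d"
proof -
  assume d: "d > 0"
  have "real x = real (x div d) * real d + real (x mod d)"
    by (metis div_mult_mod_eq of_nat_add of_nat_mult)
  then show ?thesis using d by (simp add: field_simps)
qed

lemma sumA:
  fixes a d k q :: nat assumes d: "d > 0"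
  shows "real (Suc q) * (\<Sum>n\<in>Aset a d k. real n ^ q) =
    real d ^ q * (bernpoly (Suc q) (real (k*a) / real d) - bernpoly (Suc q) (real (k*a mod d) / real d))"
proof -
  have inj: "inj_on (\<lambda>t. k*a mod d + t*d) {..<k*a div d}" using d by (auto simp: inj_on_def)
  have "(\<Sum>n\<in>Aset a d k. real n ^ q) = (\<Sum>t<k*a div d. (real (k*a mod d) + real t * real d) ^ q)"
    unfolding Aset_def by (simp add: sum.reindex[OF inj])
  then show ?thesis using APL[OF d, of q "k*a mod d" "k*a div d"] real_mod_div[OF d, of "k*a"] by simp
qed

lemma sumB:
  fixes a d s k q :: nat assumes d: "d > 0"
  shows "real (Suc q) * (\<Sum>n\<in>Bset a d s k. real n ^ q) =
    real d ^ q * (bernpoly (Suc q) (real k * real (a + s*d) / real d + 1) - bernpoly (Suc q) (real (k*a) / real d))"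
proof -
  have inj: "inj_on (\<lambda>t. k*a + t*d) {..k*s}" using d by (auto simp: inj_on_def)
  have S: "(\<Sum>n\<in>Bset a d s k. real n ^ q) = (\<Sum>t<Suc (k*s). (real (k*a) + real t * real d) ^ q)"
  proof -
    have "(\<Sum>n\<in>Bset a d s k. real n ^ q) = (\<Sum>t\<in>{..k*s}. real (k*a + t*d) ^ q)"
      unfolding Bset_def by (simp add: sum.reindex[OF inj])
    also have "\<dots> = (\<Sum>t<Suc (k*s). (real (k*a) + real t * real d) ^ q)"
      unfolding lessThan_Suc_atMost by simp
    finally show ?thesis .
  qed
  have e: "real (k*a) / real d + real (Suc (k*s)) = real k * real (a + s*d) / real d + 1"
    using d by (simp add: field_simps)
  have "real (Suc q) * (\<Sum>n\<in>Bset a d s k. real n ^ q) = real (Suc q) * (\<Sum>t<Suc (k*s). (real (k*a) + real t * real d) ^ q)"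
    by (simp only: S)
  also have "\<dots> = real d ^ q * (bernpoly (Suc q) (real (k*a) / real d + real (Suc (k*s))) - bernpoly (Suc q) (real (k*a) / real d))"
    by (rule APL[OF d])
  also have "\<dots> = real d ^ q * (bernpoly (Suc q) (real k * real (a + s*d) / real d + 1) - bernpoly (Suc q) (real (k*a) / real d))"
    by (simp only: e)
  finally show ?thesis .
qed



lemma Ssum_formula:
  fixes a d s N q :: nat
  assumes a: "a \<ge> 2" and d: "d \<ge> 1" and cop: "coprime a d" and s: "s \<ge> 1"
    and HN1: "a \<le> N*s + 1" and HN2: "\<And>k. k < N \<Longrightarrow> k*s + 1 < a"
  shows "real (Suc q) * Ssum a d s q = real d ^ q *
     ((\<Sum>k<N+d. bernpoly (Suc q) (real (k*a) / real d))
      - (\<Sum>k<N. bernpoly (Suc q) (real k * real (a + s*d) / real d + 1))) - bernoulli (Suc q)"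
proof -
  have d0: "d > 0" using d by simp
  define U1 where "U1 = (\<Union>k\<in>{N..<N+d}. Aset a d k)"
  define U2 where "U2 = (\<Union>k\<in>{..<N}. Bset a d s k)"
  define f where "f = (\<lambda>n::nat. real n ^ q)"
  define BP where "BP = (\<lambda>x. bernpoly (Suc q) x)"
  have finA: "finite (Aset a d k)" for k by (simp add: Aset_def)
  have finB: "finite (Bset a d s k)" for k by (simp add: Bset_def)
  have fin1: "finite U1" unfolding U1_def using finA by simp
  have sub: "U2 \<subseteq> U1" unfolding U1_def U2_def by (rule U2_sub[OF a d cop s HN1 HN2])
  have "Ssum a d s q = sum f (U1 - U2)"
    using NR_eq[OF a d cop s HN1 HN2] by (simp add: Ssum_def f_def U1_def U2_def)
  also have "\<dots> = sum f U1 - sum f U2" by (rule sum_diff[OF fin1 sub])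
  finally have S: "Ssum a d s q = sum f U1 - sum f U2" .
  have S1: "sum f U1 = (\<Sum>k\<in>{N..<N+d}. sum f (Aset a d k))"
    unfolding U1_def by (rule sum.UNION_disjoint) (simp_all add: finA A_disj[OF d cop])
  have S2: "sum f U2 = (\<Sum>k<N. sum f (Bset a d s k))"
    unfolding U2_def by (rule sum.UNION_disjoint) (simp_all add: finB B_disj[OF d cop HN2])
  have T1: "real (Suc q) * sum f U1 = real d ^ q * (\<Sum>k\<in>{N..<N+d}. BP (real (k*a) / real d) - BP (real (k*a mod d) / real d))"
  proof -
    have "real (Suc q) * sum f U1 = (\<Sum>k\<in>{N..<N+d}. real (Suc q) * sum f (Aset a d k))"
      by (simp only: S1 sum_distrib_left)
    also have "\<dots> = (\<Sum>k\<in>{N..<N+d}. real d ^ q * (BP (real (k*a) / real d) - BP (real (k*a mod d) / real d)))"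
      by (rule sum.cong[OF refl]) (simp only: f_def BP_def sumA[OF d0])
    finally show ?thesis by (simp only: sum_distrib_left)
  qed
  have T2: "real (Suc q) * sum f U2 = real d ^ q * (\<Sum>k<N. BP (real k * real (a + s*d) / real d + 1) - BP (real (k*a) / real d))"
  proof -
    have "real (Suc q) * sum f U2 = (\<Sum>k<N. real (Suc q) * sum f (Bset a d s k))"
      by (simp only: S2 sum_distrib_left)
    also have "\<dots> = (\<Sum>k<N. real d ^ q * (BP (real k * real (a + s*d) / real d + 1) - BP (real (k*a) / real d)))"
      by (rule sum.cong[OF refl]) (simp only: f_def BP_def sumB[OF d0])
    finally show ?thesis by (simp only: sum_distrib_left)
  qed
  have R: "(\<Sum>k\<in>{N..<N+d}. BP (real (k*a mod d) / real d)) = (\<Sum>r<d. BP (real r / real d))"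
    using sum.reindex_bij_betw[OF classes_bij[OF cop d0, of N], of "\<lambda>r. BP (real r / real d)"] by simp
  have M: "real d ^ q * (\<Sum>r<d. BP (real r / real d)) = bernoulli (Suc q)"
  proof -
    have "real d ^ q * (\<Sum>r<d. BP (real r / real d)) = real d ^ q * (real d * (1 / real d) ^ Suc q * bernoulli (Suc q))"
      unfolding BP_def by (simp only: bernpoly_mult[OF d0])
    also have "\<dots> = bernoulli (Suc q)" using d0 by (simp add: field_simps power_one_over)
    finally show ?thesis .
  qed
  have split: "(\<Sum>k<N+d. BP (real (k*a) / real d)) = (\<Sum>k<N. BP (real (k*a) / real d)) + (\<Sum>k\<in>{N..<N+d}. BP (real (k*a) / real d))"
  proof -
    have "{..<N+d} = {..<N} \<union> {N..<N+d}" by auto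
    moreover have "{..<N} \<inter> {N..<N+d} = {}" by auto
    ultimately show ?thesis by (simp only: sum.union_disjoint[OF finite_lessThan finite_atLeastLessThan])
  qed
  have "real (Suc q) * Ssum a d s q = real (Suc q) * sum f U1 - real (Suc q) * sum f U2"
    by (simp add: S algebra_simps)
  also have "\<dots> = real d ^ q * ((\<Sum>k<N+d. BP (real (k*a) / real d))
      - (\<Sum>k<N. BP (real k * real (a + s*d) / real d + 1))) - real d ^ q * (\<Sum>r<d. BP (real r / real d))"
    unfolding T1 T2 split R[symmetric] by (simp add: sum_subtractf algebra_simps)
  also have "\<dots> = real d ^ q * ((\<Sum>k<N+d. BP (real (k*a) / real d))
      - (\<Sum>k<N. BP (real k * real (a + s*d) / real d + 1))) - bernoulli (Suc q)"
    by (simp only: M)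
  finally show ?thesis unfolding BP_def .
qed



lemma bernpoly_shift': "bernpoly n (1 + x) - bernpoly n x = of_nat n * x ^ (n - 1)"
  using bernpoly_shift[of n x] by (simp add: add.commute)

lemma phi_sum: "phi j (real M) = (\<Sum>k<M. real j * real k ^ (j - 1))"
proof -
  have "phi j (real M) = (\<Sum>k<M. bernpoly j (real (Suc k)) - bernpoly j (real k))"
    using sum_lessThan_telescope[of "\<lambda>k. bernpoly j (real k)" M]
    by (simp add: phi_def bernoulli_def)
  also have "\<dots> = (\<Sum>k<M. real j * real k ^ (j - 1))"
    by (rule sum.cong[OF refl]) (simp add: bernpoly_shift')
  finally show ?thesis .
qed

lemma phi_Suc: "phi (Suc j) x = (\<Sum>i=0..j. real (Suc j choose Suc i) * bernoulli (j - i) * x ^ Suc i)"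
proof -
  have "bernpoly (Suc j) x = (\<Sum>i=0..Suc j. real (Suc j choose i) * bernoulli (Suc j - i) * x ^ i)"
    by (rule bernpoly_expand)
  also have "\<dots> = bernoulli (Suc j) + (\<Sum>i=0..j. real (Suc j choose Suc i) * bernoulli (j - i) * x ^ Suc i)"
    by (subst sum.atLeast0_atMost_Suc_shift) simp
  finally show ?thesis by (simp add: phi_def)
qed

lemma inner:
  fixes y w z :: real and q :: nat
  assumes y: "y \<noteq> 0"
  shows "(\<Sum>j=0..Suc (Suc q). real (Suc (Suc q) choose j) * y powi (int (Suc (Suc q)) - int j - 1)
            * bernoulli (Suc (Suc q) - j) * w powi (int j - 1) * (real j * z ^ (j - 1)))
       = real (Suc (Suc q)) * y ^ q * bernpoly (Suc q) (z * w / y)"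
proof -
  have "(\<Sum>j=0..Suc (Suc q). real (Suc (Suc q) choose j) * y powi (int (Suc (Suc q)) - int j - 1)
            * bernoulli (Suc (Suc q) - j) * w powi (int j - 1) * (real j * z ^ (j - 1)))
      = (\<Sum>i=0..Suc q. real (Suc (Suc q) choose Suc i) * y powi (int (Suc (Suc q)) - int (Suc i) - 1)
            * bernoulli (Suc (Suc q) - Suc i) * w powi (int (Suc i) - 1) * (real (Suc i) * z ^ i))"
    by (subst sum.atLeast0_atMost_Suc_shift) simp
  also have "\<dots> = (\<Sum>i=0..Suc q. real (Suc (Suc q)) * (y ^ q * (real (Suc q choose i) * bernoulli (Suc q - i) * (z * w / y) ^ i)))"
  proof (rule sum.cong[OF refl])
    fix i assume i: "i \<in> {0..Suc q}"
    have c: "real (Suc (Suc q) choose Suc i) * real (Suc i) = real (Suc (Suc q)) * real (Suc q choose i)"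
      using Suc_times_binomial[of i "Suc q"] by (metis of_nat_mult mult.commute)
    have p1: "y powi (int (Suc (Suc q)) - int (Suc i) - 1) = y ^ q / y ^ i"
    proof -
      have "int (Suc (Suc q)) - int (Suc i) - 1 = int q - int i" by simp
      then show ?thesis using y by (simp add: power_int_diff)
    qed
    have p2: "w powi (int (Suc i) - 1) = w ^ i" by simp
    have p3: "(z * w / y) ^ i = z ^ i * w ^ i / y ^ i" by (simp add: power_mult_distrib power_divide)
    show "real (Suc (Suc q) choose Suc i) * y powi (int (Suc (Suc q)) - int (Suc i) - 1)
            * bernoulli (Suc (Suc q) - Suc i) * w powi (int (Suc i) - 1) * (real (Suc i) * z ^ i)
        = real (Suc (Suc q)) * (y ^ q * (real (Suc q choose i) * bernoulli (Suc q - i) * (z * w / y) ^ i))"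
    proof -
      define C where "C = real (Suc (Suc q) choose Suc i)"
      define Bi where "Bi = bernoulli (Suc q - i)"
      have "real (Suc (Suc q) choose Suc i) * y powi (int (Suc (Suc q)) - int (Suc i) - 1)
            * bernoulli (Suc (Suc q) - Suc i) * w powi (int (Suc i) - 1) * (real (Suc i) * z ^ i)
          = (C * real (Suc i)) * (Bi * (y ^ q * (z ^ i * w ^ i / y ^ i)))"
        unfolding p1 p2 C_def Bi_def by simp
      also have "\<dots> = real (Suc (Suc q)) * real (Suc q choose i) * (Bi * (y ^ q * (z ^ i * w ^ i / y ^ i)))"
        unfolding C_def c ..
      also have "\<dots> = real (Suc (Suc q)) * (y ^ q * (real (Suc q choose i) * bernoulli (Suc q - i) * (z * w / y) ^ i))"
        unfolding p3 Bi_def by simp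
      finally show ?thesis .
    qed
  qed
  also have "\<dots> = real (Suc (Suc q)) * y ^ q * bernpoly (Suc q) (z * w / y)"
    by (simp only: bernpoly_expand sum_distrib_left mult.assoc)
  finally show ?thesis .
qed



lemma phi0: "phi 0 x = 0"
  unfolding phi_def bernpoly_expand[of 0 x] by simp

lemma negpow: "(- (y::real)) ^ q * (-1) ^ Suc q = - (y ^ q)"
  by (induct q) (simp_all add: algebra_simps)

lemma fin_arith:
  fixes x S R1 R2 B :: real
  assumes x: "x > 0" and P: "(x + 1) * x * S = R1 + R2 - (x + 1) * B"
  shows "S = 1 / (x * (x + 1)) * R1 + 1 / (x * (x + 1)) * R2 - 1 / x * B"
proof -
  have nz: "(x + 1) * x \<noteq> 0" using x by simp
  have "S = (R1 + R2 - (x + 1) * B) / ((x + 1) * x)"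
    using P nz by (simp add: eq_divide_eq mult.commute)
  also have "\<dots> = 1 / (x * (x + 1)) * R1 + 1 / (x * (x + 1)) * R2 - 1 / x * B"
    using nz x by (simp add: diff_divide_distrib add_divide_distrib mult.commute)
  finally show ?thesis .
qed

theorem mainTheorem5:
  fixes a d s :: nat
  assumes "a \<ge> 2" and "d \<ge> 1" and "coprime a d" and "1 \<le> s" and "s < a"
  defines "b \<equiv> a + s * d"
  defines "cb \<equiv> \<lceil>(real b - 1) / real s\<rceil>"
  defines "ca \<equiv> \<lceil>(real a - 1) / real s\<rceil>"
  shows "(\<forall>m::nat. m \<ge> 2 \<longrightarrow>
      real m * (real m - 1) * Ssum a d s (m - 2) =
        (\<Sum>j=0..m. real (m choose j) * real d powi (int m - int j - 1) * bernoulli (m - j)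
            * real a powi (int j - 1) * phi j (real_of_int cb))
      + (\<Sum>j=0..m. real (m choose j) * (- real d) powi (int m - int j - 1) * bernoulli (m - j)
            * real b powi (int j - 1) * phi j (real_of_int ca))
      - real m * bernoulli (m - 1)) \<and>
    (\<forall>m::nat. m \<ge> 1 \<longrightarrow>
      Ssum a d s (m - 1) =
        1 / (real m * (real m + 1)) * (\<Sum>j=0..m. \<Sum>i=0..j.
            real ((m + 1) choose (j + 1)) * real ((j + 1) choose (i + 1))
            * real d powi (int m - int j - 1) * bernoulli (m - j) * bernoulli (j - i)
            * real a ^ j * real_of_int cb ^ (i + 1))
      + 1 / (real m * (real m + 1)) * (\<Sum>j=0..m. \<Sum>i=0..j.
            real ((m + 1) choose (j + 1)) * real ((j + 1) choose (i + 1))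
            * (- real d) powi (int m - int j - 1) * bernoulli (m - j) * bernoulli (j - i)
            * real b ^ j * real_of_int ca ^ (i + 1))
      - 1 / real m * bernoulli m)"
proof -
  have a2: "a \<ge> 2" and d1: "d \<ge> 1" and cop: "coprime a d" and s1: "s \<ge> 1" using assms by auto
  have d0: "real d \<noteq> 0" using d1 by simp
  have sp: "real s > 0" using s1 by simp
  define N where "N = nat ca"
  have ca_pos: "ca \<ge> 1"
  proof -
    have "(real a - 1) / real s > 0" using a2 sp by simp
    then show ?thesis unfolding ca_def by (simp add: one_le_ceiling)
  qed
  have caN: "ca = int N" using ca_pos by (simp add: N_def)
  have HN1: "a \<le> N*s + 1"
  proof -
    have "(real a - 1) / real s \<le> real N" using caN unfolding ca_def
      by (metis le_of_int_ceiling of_int_of_nat_eq)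
    then have "real a - 1 \<le> real N * real s" using sp by (simp add: divide_le_eq)
    then have "real a \<le> real (N*s + 1)" by simp
    then show ?thesis by linarith
  qed
  have HN2: "k*s + 1 < a" if k: "k < N" for k
  proof -
    have "int k < ca" using k caN by simp
    then have "real k < (real a - 1) / real s" unfolding ca_def by (simp add: less_ceiling_iff)
    then have "real k * real s < real a - 1" using sp by (simp add: less_divide_eq)
    then have "real (k*s + 1) < real a" by simp
    then show ?thesis by linarith
  qed
  have cbN: "real_of_int cb = real (N + d)"
  proof -
    have "(real b - 1) / real s = (real a - 1) / real s + of_int (int d)"
      using sp by (simp add: b_def field_simps)
    then have "cb = ca + int d" unfolding cb_def ca_def by (simp only: ceiling_add_of_int)
    then show ?thesis using caN by simp
  qed
  have caR: "real_of_int ca = real N" using caN by simp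
  have P1: "\<forall>m::nat. m \<ge> 2 \<longrightarrow>
      real m * (real m - 1) * Ssum a d s (m - 2) =
        (\<Sum>j=0..m. real (m choose j) * real d powi (int m - int j - 1) * bernoulli (m - j)
            * real a powi (int j - 1) * phi j (real_of_int cb))
      + (\<Sum>j=0..m. real (m choose j) * (- real d) powi (int m - int j - 1) * bernoulli (m - j)
            * real b powi (int j - 1) * phi j (real_of_int ca))
      - real m * bernoulli (m - 1)"
  proof (intro allI impI)
    fix m :: nat assume m2: "m \<ge> 2"
    then obtain q where m: "m = Suc (Suc q)" by (metis add_2_eq_Suc le_Suc_ex)
    define BP where "BP = bernpoly (Suc q)"
    have R1: "(\<Sum>j=0..m. real (m choose j) * real d powi (int m - int j - 1) * bernoulli (m - j)
            * real a powi (int j - 1) * phi j (real_of_int cb))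
        = real m * real d ^ q * (\<Sum>k<N+d. BP (real k * real a / real d))"
    proof -
      have "(\<Sum>j=0..m. real (m choose j) * real d powi (int m - int j - 1) * bernoulli (m - j)
            * real a powi (int j - 1) * phi j (real_of_int cb))
          = (\<Sum>j=0..m. \<Sum>k<N+d. real (m choose j) * real d powi (int m - int j - 1) * bernoulli (m - j)
            * real a powi (int j - 1) * (real j * real k ^ (j - 1)))"
        unfolding cbN phi_sum sum_distrib_left ..
      also have "\<dots> = (\<Sum>k<N+d. \<Sum>j=0..m. real (m choose j) * real d powi (int m - int j - 1) * bernoulli (m - j)
            * real a powi (int j - 1) * (real j * real k ^ (j - 1)))"
        by (rule sum.swap)
      also have "\<dots> = (\<Sum>k<N+d. real m * real d ^ q * BP (real k * real a / real d))"
        unfolding m BP_def by (rule sum.cong[OF refl]) (rule inner[OF d0])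
      finally show ?thesis by (simp add: sum_distrib_left)
    qed
    have R2: "(\<Sum>j=0..m. real (m choose j) * (- real d) powi (int m - int j - 1) * bernoulli (m - j)
            * real b powi (int j - 1) * phi j (real_of_int ca))
        = - (real m * real d ^ q * (\<Sum>k<N. BP (real k * real b / real d + 1)))"
    proof -
      have nd: "- real d \<noteq> 0" using d0 by simp
      have "(\<Sum>j=0..m. real (m choose j) * (- real d) powi (int m - int j - 1) * bernoulli (m - j)
            * real b powi (int j - 1) * phi j (real_of_int ca))
          = (\<Sum>j=0..m. \<Sum>k<N. real (m choose j) * (- real d) powi (int m - int j - 1) * bernoulli (m - j)
            * real b powi (int j - 1) * (real j * real k ^ (j - 1)))"
        unfolding caR phi_sum sum_distrib_left ..
      also have "\<dots> = (\<Sum>k<N. \<Sum>j=0..m. real (m choose j) * (- real d) powi (int m - int j - 1) * bernoulli (m - j)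
            * real b powi (int j - 1) * (real j * real k ^ (j - 1)))"
        by (rule sum.swap)
      also have "\<dots> = (\<Sum>k<N. real m * (- real d) ^ q * BP (real k * real b / (- real d)))"
        unfolding m BP_def by (rule sum.cong[OF refl]) (rule inner[OF nd])
      also have "\<dots> = (\<Sum>k<N. - (real m * real d ^ q * BP (real k * real b / real d + 1)))"
      proof (rule sum.cong[OF refl])
        fix k
        have "BP (real k * real b / (- real d)) = (-1) ^ Suc q * BP (real k * real b / real d + 1)"
          unfolding BP_def using bernpoly_reflect[of "Suc q" "real k * real b / real d"] by simp
        then show "real m * (- real d) ^ q * BP (real k * real b / (- real d)) =
            - (real m * real d ^ q * BP (real k * real b / real d + 1))"
          using negpow[of "real d" q] by (simp add: mult_ac)
      qed
      finally show ?thesis by (simp add: sum_distrib_left sum_negf)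
    qed
    have key: "real (Suc q) * Ssum a d s q = real d ^ q *
       ((\<Sum>k<N+d. BP (real k * real a / real d))
        - (\<Sum>k<N. BP (real k * real b / real d + 1))) - bernoulli (Suc q)"
      using Ssum_formula[OF a2 d1 cop s1 HN1 HN2, of q] unfolding BP_def b_def by simp
    have "real m * (real m - 1) * Ssum a d s (m - 2) = real m * (real (Suc q) * Ssum a d s q)"
      using m by simp
    also have "\<dots> = real m * real d ^ q * (\<Sum>k<N+d. BP (real k * real a / real d))
        - real m * real d ^ q * (\<Sum>k<N. BP (real k * real b / real d + 1)) - real m * bernoulli (Suc q)"
      unfolding key by (simp add: algebra_simps)
    finally show "real m * (real m - 1) * Ssum a d s (m - 2) =
        (\<Sum>j=0..m. real (m choose j) * real d powi (int m - int j - 1) * bernoulli (m - j)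
            * real a powi (int j - 1) * phi j (real_of_int cb))
      + (\<Sum>j=0..m. real (m choose j) * (- real d) powi (int m - int j - 1) * bernoulli (m - j)
            * real b powi (int j - 1) * phi j (real_of_int ca))
      - real m * bernoulli (m - 1)"
      unfolding R1 R2 using m by simp
  qed
  have P2: "Ssum a d s (m - 1) =
        1 / (real m * (real m + 1)) * (\<Sum>j=0..m. \<Sum>i=0..j.
            real ((m + 1) choose (j + 1)) * real ((j + 1) choose (i + 1))
            * real d powi (int m - int j - 1) * bernoulli (m - j) * bernoulli (j - i)
            * real a ^ j * real_of_int cb ^ (i + 1))
      + 1 / (real m * (real m + 1)) * (\<Sum>j=0..m. \<Sum>i=0..j.
            real ((m + 1) choose (j + 1)) * real ((j + 1) choose (i + 1))
            * (- real d) powi (int m - int j - 1) * bernoulli (m - j) * bernoulli (j - i)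
            * real b ^ j * real_of_int ca ^ (i + 1))
      - 1 / real m * bernoulli m" if m1: "m \<ge> 1" for m
  proof -
    have conv: "(\<Sum>j=0..m. \<Sum>i=0..j.
            real ((m + 1) choose (j + 1)) * real ((j + 1) choose (i + 1))
            * y powi (int m - int j - 1) * bernoulli (m - j) * bernoulli (j - i)
            * w ^ j * x ^ (i + 1))
        = (\<Sum>j=0..Suc m. real (Suc m choose j) * y powi (int (Suc m) - int j - 1) * bernoulli (Suc m - j)
            * w powi (int j - 1) * phi j x)" for y w x :: real
    proof -
      have "(\<Sum>j=0..Suc m. real (Suc m choose j) * y powi (int (Suc m) - int j - 1) * bernoulli (Suc m - j)
            * w powi (int j - 1) * phi j x)
          = (\<Sum>j=0..m. real (Suc m choose Suc j) * y powi (int (Suc m) - int (Suc j) - 1) * bernoulli (Suc m - Suc j)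
            * w powi (int (Suc j) - 1) * phi (Suc j) x)"
        by (subst sum.atLeast0_atMost_Suc_shift) (simp add: phi0 diff_diff_eq add.commute)
      also have "\<dots> = (\<Sum>j=0..m. \<Sum>i=0..j.
            real ((m + 1) choose (j + 1)) * real ((j + 1) choose (i + 1))
            * y powi (int m - int j - 1) * bernoulli (m - j) * bernoulli (j - i)
            * w ^ j * x ^ (i + 1))"
      proof (rule sum.cong[OF refl])
        fix j
        have e1: "y powi (int (Suc m) - int (Suc j) - 1) = y powi (int m - int j - 1)" by simp
        have e2: "w powi (int (Suc j) - 1) = w ^ j" by simp
        show "real (Suc m choose Suc j) * y powi (int (Suc m) - int (Suc j) - 1) * bernoulli (Suc m - Suc j)
            * w powi (int (Suc j) - 1) * phi (Suc j) x = (\<Sum>i=0..j.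
            real ((m + 1) choose (j + 1)) * real ((j + 1) choose (i + 1))
            * y powi (int m - int j - 1) * bernoulli (m - j) * bernoulli (j - i)
            * w ^ j * x ^ (i + 1))"
          unfolding e1 e2 phi_Suc sum_distrib_left by (rule sum.cong[OF refl]) (simp add: mult_ac)
      qed
      finally show ?thesis by simp
    qed
    obtain q where m: "m = Suc q" using m1 by (cases m) auto
    define R1 where "R1 = (\<Sum>j=0..Suc m. real (Suc m choose j) * real d powi (int (Suc m) - int j - 1) * bernoulli (Suc m - j)
            * real a powi (int j - 1) * phi j (real_of_int cb))"
    define R2 where "R2 = (\<Sum>j=0..Suc m. real (Suc m choose j) * (- real d) powi (int (Suc m) - int j - 1) * bernoulli (Suc m - j)
            * real b powi (int j - 1) * phi j (real_of_int ca))"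
    have P: "real (Suc m) * (real (Suc m) - 1) * Ssum a d s (Suc m - 2) = R1 + R2 - real (Suc m) * bernoulli (Suc m - 1)"
      unfolding R1_def R2_def by (rule P1[rule_format]) (use m1 in simp)
    have e1: "Suc m - 2 = m - 1" "Suc m - 1 = m" "real (Suc m) - 1 = real m" "real (Suc m) = real m + 1" by simp_all
    have P': "(real m + 1) * real m * Ssum a d s (m - 1) = R1 + R2 - (real m + 1) * bernoulli m"
      using P unfolding e1 by simp
    have mp: "real m > 0" using m1 by simp
    show ?thesis
      unfolding conv R1_def[symmetric] R2_def[symmetric] by (rule fin_arith[OF mp P'])
  qed
  show ?thesis using P1 P2 by blast
qed

end
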